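(* Let $p_k$ denote the $k$th prime and $S_n^{(\alpha)}=\sum_{k=1}^n p_k^{\alpha}$. Let $\alpha\geqslant 1$ and let $n$ be a positive integer with $n\geqslant 55$. Then $$\log S_n^{(\alpha)}>(\alpha+1)\log n.$$
   Context: $p_k$ is the $k$th prime ($p_1=2$), $S_n^{(\alpha)}=\sum_{k=1}^n p_k^{\alpha}$, and $\log$ is the natural logarithm. *)

theory Defs
  imports "HOL-Analysis.Analysis" "HOL-Computational_Algebra.Primes" "HOL-Library.Infinite_Set"
begin

(* p k = the k-th prime, 1-indexed: p 1 = 2, p 2 = 3, ... (p 0 is a junk value) *)
definition kth_prime :: "nat \<Rightarrow> nat" where
  "kth_prime k = enumerate {q::nat. prime q} (k - 1)"

definition S :: "real \<Rightarrow> nat \<Rightarrow> real" where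
  "S \<alpha> n = (\<Sum>k=1..n. real (kth_prime k) powr \<alpha>)"

end

theory Submission
  imports Defs
begin

lemma prime_mod6:
  fixes p :: nat assumes "prime p" "p \<ge> 5"
  shows "p mod 6 = 1 \<or> p mod 6 = 5"
proof (rule ccontr)
  assume h: "\<not> (p mod 6 = 1 \<or> p mod 6 = 5)"
  have e2: "p mod 2 = (p mod 6) mod 2" by (simp add: mod_mod_cancel)
  have e3: "p mod 3 = (p mod 6) mod 3" by (simp add: mod_mod_cancel)
  have "p mod 6 < 6" by simp
  hence "p mod 6 = 0 \<or> p mod 6 = 2 \<or> p mod 6 = 3 \<or> p mod 6 = 4" using h by linarith
  hence dv: "2 dvd p \<or> 3 dvd p"
  proof (elim disjE)
    assume "p mod 6 = 0" hence "p mod 2 = 0" using e2 by simp thus ?thesis using mod_0_imp_dvd by blast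
  next
    assume "p mod 6 = 2" hence "p mod 2 = 0" using e2 by simp thus ?thesis using mod_0_imp_dvd by blast
  next
    assume "p mod 6 = 3" hence "p mod 3 = 0" using e3 by simp thus ?thesis using mod_0_imp_dvd by blast
  next
    assume "p mod 6 = 4" hence "p mod 2 = 0" using e2 by simp thus ?thesis using mod_0_imp_dvd by blast
  qed
  moreover have D: "\<And>d. d dvd p \<Longrightarrow> d = 1 \<or> d = p" using assms(1) prime_nat_iff by blast
  from dv show False
  proof
    assume "2 dvd p" hence "2 = (1::nat) \<or> 2 = p" by (rule D)
    thus False using assms(2) by linarith
  next
    assume "3 dvd p" hence "3 = (1::nat) \<or> 3 = p" by (rule D)
    thus False using assms(2) by linarith
  qed
qed

lemma m6a: "(x::nat) < y \<Longrightarrow> x mod 6 = 5 \<Longrightarrow> y mod 6 = 1 \<Longrightarrow> x+2 \<le> y"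
proof - assume a: "x < y" "x mod 6 = 5" "y mod 6 = 1"
  have "x div 6 < y div 6" using a div_mult_mod_eq[of x 6] div_mult_mod_eq[of y 6] by linarith
  thus ?thesis using a div_mult_mod_eq[of x 6] div_mult_mod_eq[of y 6] by linarith qed
lemma m6b: "(x::nat) < y \<Longrightarrow> x mod 6 = 1 \<Longrightarrow> y mod 6 = 5 \<Longrightarrow> x+4 \<le> y"
proof - assume a: "x < y" "x mod 6 = 1" "y mod 6 = 5"
  have "x div 6 \<le> y div 6" using a div_mult_mod_eq[of x 6] div_mult_mod_eq[of y 6] by linarith
  thus ?thesis using a div_mult_mod_eq[of x 6] div_mult_mod_eq[of y 6] by linarith qed
lemma m6c: "(x::nat) < y \<Longrightarrow> x mod 6 = y mod 6 \<Longrightarrow> x+6 \<le> y"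
proof - assume a: "x < y" "x mod 6 = y mod 6"
  have "x div 6 < y div 6" using a div_mult_mod_eq[of x 6] div_mult_mod_eq[of y 6] by linarith
  thus ?thesis using a div_mult_mod_eq[of x 6] div_mult_mod_eq[of y 6] by linarith qed

abbreviation "PR \<equiv> {q::nat. prime q}"

lemma infPR: "infinite PR" using primes_infinite by simp

lemma q_ge: "enumerate PR j \<ge> j + 2"
proof (induction j)
  case 0
  have "prime (enumerate PR 0)" using enumerate_in_set[OF infPR, of 0] by simp
  thus ?case using prime_ge_2_nat[of "enumerate PR 0"] by simp
next
  case (Suc j) then show ?case using enumerate_mono[OF lessI infPR, of j] by simp
qed

lemma q_inv: "j \<ge> 2 \<Longrightarrow> (enumerate PR j mod 6 = 5 \<and> enumerate PR j \<ge> 3*j-1) \<or>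
   (enumerate PR j mod 6 = 1 \<and> enumerate PR j \<ge> 3*j-2)"
proof (induction j rule: dec_induct)
  case base
  have "prime (enumerate PR 2)" using enumerate_in_set[OF infPR, of 2] by simp
  moreover have "enumerate PR 2 \<ge> 4" using q_ge[of 2] by simp
  moreover have "enumerate PR 2 \<noteq> 4" proof
    assume "enumerate PR 2 = 4"
    with calculation(1) have "prime (4::nat)" by simp
    moreover have "(2::nat) dvd 4" by simp
    ultimately show False using prime_nat_iff[of 4] by fastforce
  qed
  ultimately have "enumerate PR 2 \<ge> 5" by simp
  with prime_mod6[OF \<open>prime (enumerate PR 2)\<close> this] show ?case by auto
next
  case (step j)
  let ?x = "enumerate PR j" and ?y = "enumerate PR (Suc j)"
  have "?y > ?x" using enumerate_mono[OF lessI infPR] by simp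
  moreover have "prime ?y" using enumerate_in_set[OF infPR] by simp
  moreover have "?y \<ge> 5" using q_ge[of "Suc j"] step by simp
  ultimately have "?y mod 6 = 1 \<or> ?y mod 6 = 5" using prime_mod6 by blast
  with step.IH \<open>?y > ?x\<close> m6a[of ?x ?y] m6b[of ?x ?y] m6c[of ?x ?y] show ?case by (elim disjE conjE) auto
qed

lemma kth_ge: "k \<ge> 10 \<Longrightarrow> real (kth_prime k) \<ge> 5/2 * real k"
proof -
  assume k: "k \<ge> 10"
  have h: "(enumerate PR (k-1) mod 6 = 5 \<and> enumerate PR (k-1) \<ge> 3*(k-1)-1) \<or>
   (enumerate PR (k-1) mod 6 = 1 \<and> enumerate PR (k-1) \<ge> 3*(k-1)-2)" using q_inv[of "k-1"] k by simp
  have "kth_prime k \<ge> 3*(k-1) - 2" using h unfolding kth_prime_def by arith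
  hence "real (kth_prime k) \<ge> 3 * real k - 5" using k by linarith
  thus ?thesis using k by linarith
qed

lemma mvt_step:
  fixes r x :: real assumes "r \<ge> 1" "x \<ge> 1"
  shows "(x+1) powr r - x powr r \<le> r * (x+1) powr (r-1)"
proof -
  obtain z where z: "x < z" "z < x+1" "(x+1) powr r - x powr r = ((x+1) - x) * (r * z powr (r-1))"
    using MVT2[of x "x+1" "\<lambda>t. t powr r" "\<lambda>t. r * t powr (r-1)"] has_real_derivative_powr assms by force
  have "z powr (r-1) \<le> (x+1) powr (r-1)" using z assms by (intro powr_mono2) auto
  thus ?thesis using z assms by simp
qed

lemma sum_lb:
  fixes a :: real assumes "a \<ge> 1" "n \<ge> 9"
  shows "(\<Sum>k=10..n. real k powr a) \<ge> (real n powr (a+1) - 9 powr (a+1)) / (a+1)"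
  using assms(2)
proof (induction n rule: dec_induct)
  case base then show ?case by simp
next
  case (step n)
  have "(real n + 1) powr (a+1) - real n powr (a+1) \<le> (a+1) * (real n + 1) powr (a+1-1)"
    by (rule mvt_step) (use assms step in auto)
  hence "real (Suc n) powr (a+1) - real n powr (a+1) \<le> (a+1) * real (Suc n) powr a"
    by (simp add: algebra_simps)
  hence d: "(real (Suc n) powr (a+1) - real n powr (a+1)) / (a+1) \<le> real (Suc n) powr a"
    using assms by (simp add: pos_divide_le_eq mult.commute)
  have "(real (Suc n) powr (a+1) - 9 powr (a+1)) / (a+1) = (real n powr (a+1) - 9 powr (a+1)) / (a+1) + (real (Suc n) powr (a+1) - real n powr (a+1)) / (a+1)"
    by (simp add: diff_divide_distrib)
  hence "(real (Suc n) powr (a+1) - 9 powr (a+1)) / (a+1) \<le> (real n powr (a+1) - 9 powr (a+1)) / (a+1) + real (Suc n) powr a"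
    using d by linarith
  also have "\<dots> \<le> (\<Sum>k=10..Suc n. real k powr a)" using step by simp
  finally show ?case .
qed

lemma c_bound:
  fixes a :: real assumes "a \<ge> 1"
  shows "(5/2) powr a \<ge> 5/4 * (a+1)"
proof -
  have e: "exp (1/2) \<le> (5/2::real)"
  proof -
    have "exp (1/2) * exp (1/2) = exp (1::real)" by (simp flip: exp_add)
    also have "\<dots> \<le> 3" by (rule exp_le)
    finally have "exp (1/2) * exp (1/2) \<le> (3::real)" .
    show ?thesis
    proof (rule ccontr)
      assume "\<not> exp (1/2) \<le> (5/2::real)"
      hence "exp (1/2) > (5/2::real)" by simp
      hence "exp (1/2) * exp (1/2) > (5/2::real) * (5/2)" by (intro mult_strict_mono) auto
      thus False using \<open>exp (1/2) * exp (1/2) \<le> (3::real)\<close> by simp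
    qed
  qed
  have L: "ln (5/2::real) \<ge> 1/2" using e by (metis exp_le_cancel_iff exp_ln zero_less_divide_iff zero_less_numeral)
  have "(5/2) powr a = 5/2 * exp ((a-1) * ln (5/2))"
    by (simp add: powr_def exp_diff left_diff_distrib)
  also have "\<dots> \<ge> 5/2 * (1 + (a-1) * ln (5/2))" by (rule mult_left_mono[OF exp_ge_add_one_self]) simp
  finally have F: "5/2 * (1 + (a-1) * ln (5/2)) \<le> (5/2) powr a" .
  have "(a-1)*(1/2) \<le> (a-1)*ln(5/2)" using L assms by (intro mult_left_mono) auto
  hence "5/2 * (1 + (a-1)*(1/2)) \<le> 5/2 * (1 + (a-1) * ln (5/2))" by simp
  moreover have "5/4*(a+1) = 5/2 * (1 + (a-1)*(1/2))" by (simp add: field_simps)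
  ultimately show ?thesis using F by linarith
qed

theorem lemma3p2:
  fixes \<alpha> :: real and n :: nat
  assumes "\<alpha> \<ge> 1" and "n \<ge> 55"
  shows "ln (S \<alpha> n) > (\<alpha> + 1) * ln (real n)"
proof -
  have sub: "(\<Sum>k=10..n. real (kth_prime k) powr \<alpha>) \<le> S \<alpha> n"
    unfolding S_def by (rule sum_mono2) auto
  have "(\<Sum>k=10..n. (5/2 * real k) powr \<alpha>) \<le> (\<Sum>k=10..n. real (kth_prime k) powr \<alpha>)"
    using kth_ge assms by (intro sum_mono powr_mono2) auto
  moreover have "(\<Sum>k=10..n. (5/2 * real k) powr \<alpha>) = (5/2) powr \<alpha> * (\<Sum>k=10..n. real k powr \<alpha>)"
    unfolding sum_distrib_left by (intro sum.cong refl) (simp only: powr_mult)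
  ultimately have A: "(5/2) powr \<alpha> * (\<Sum>k=10..n. real k powr \<alpha>) \<le> S \<alpha> n" using sub by linarith
  define N where "N = real n powr (\<alpha>+1)"
  define M where "M = 9 powr (\<alpha>+1)"
  have sl: "(\<Sum>k=10..n. real k powr \<alpha>) \<ge> (N - M) / (\<alpha>+1)"
    using sum_lb[of \<alpha> n] assms unfolding N_def M_def by simp
  have NM: "N > 5 * M"
  proof -
    have "real n powr (\<alpha>+1) \<ge> 55 powr (\<alpha>+1)" using assms by (intro powr_mono2) auto
    moreover have "55 powr (\<alpha>+1) = (55/9) powr (\<alpha>+1) * M" unfolding M_def by (simp add: powr_divide)
    moreover have "(55/9::real) powr (\<alpha>+1) \<ge> (55/9) powr 2" using assms by (intro powr_mono) auto
    moreover have "(55/9::real) powr 2 = (55/9)^2" by (simp add: powr_numeral)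
    moreover have "M > 0" unfolding M_def by simp
    ultimately have t: "(55/9::real) powr (\<alpha>+1) \<ge> 37" by (simp add: power2_eq_square)
    have "(55/9::real) powr (\<alpha>+1) * M \<ge> 37 * M" using t \<open>M > 0\<close> by (intro mult_right_mono) auto
    thus ?thesis using \<open>M > 0\<close> \<open>real n powr (\<alpha>+1) \<ge> 55 powr (\<alpha>+1)\<close> \<open>55 powr (\<alpha>+1) = (55/9) powr (\<alpha>+1) * M\<close> unfolding N_def by linarith
  qed
  have M0: "M > 0" unfolding M_def by simp
  have C: "(5/2) powr \<alpha> \<ge> 5/4 * (\<alpha>+1)" using c_bound assms by simp
  have "N < 5/4 * (N - M)" using NM by simp
  also have "\<dots> = 5/4 * (\<alpha>+1) * ((N - M) / (\<alpha>+1))" using assms by (simp add: field_simps)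
  also have "\<dots> \<le> (5/2) powr \<alpha> * (\<Sum>k=10..n. real k powr \<alpha>)"
    using C sl NM M0 assms by (intro mult_mono) auto
  finally have "N < S \<alpha> n" using A by linarith
  moreover have "N > 0" unfolding N_def using assms by simp
  ultimately have "ln N < ln (S \<alpha> n)" by simp
  moreover have "ln N = (\<alpha>+1) * ln (real n)" unfolding N_def using assms by (simp add: ln_powr)
  ultimately show ?thesis by simp
qed

end
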